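(* Let $G$ be a group and $\mu$ a left-invariant probability measure on some algebra of subsets of $G$, with inner measure $\mu_*$. If the set $\{x\in G:x^3=1\}$ is $7$-large in $G$, then $G$ has exponent $3$. If $G$ is not of exponent $3$, then $\mu_*(\{x\in G:x^3=1\})\le\frac67$. If moreover $G$ is $2$-Engel (i.e. $[x,y,y]=1$ for all $x,y\in G$), then $\mu_*(\{x\in G:x^3=1\})\le\frac12$.
   Context: $[x,y]=x^{-1}y^{-1}xy$, $[x,y,z]=[[x,y],z]$. A subset $X\subseteq G$ is $k$-large in $G$ if the intersection of any $k$ left translates $g_1X\cap\dots\cap g_kX$ ($g_i\in G$) is non-empty. The inner measure is $\mu_*(X)=\sup\{\mu(Y):Y\subseteq X\text{ measurable}\}$. *)

theory Defs
  imports Complex_Main "HOL-Algebra.Coset"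
begin

definition comm :: "('a, 'b) monoid_scheme \<Rightarrow> 'a \<Rightarrow> 'a \<Rightarrow> 'a" where
  "comm G x y = inv\<^bsub>G\<^esub> x \<otimes>\<^bsub>G\<^esub> inv\<^bsub>G\<^esub> y \<otimes>\<^bsub>G\<^esub> x \<otimes>\<^bsub>G\<^esub> y"

definition two_Engel :: "('a, 'b) monoid_scheme \<Rightarrow> bool" where
  "two_Engel G \<longleftrightarrow> (\<forall>x\<in>carrier G. \<forall>y\<in>carrier G. comm G (comm G x y) y = \<one>\<^bsub>G\<^esub>)"

definition exponent3 :: "('a, 'b) monoid_scheme \<Rightarrow> bool" where
  "exponent3 G \<longleftrightarrow> (\<forall>x\<in>carrier G. x [^]\<^bsub>G\<^esub> (3::nat) = \<one>\<^bsub>G\<^esub>)"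

definition cube_roots :: "('a, 'b) monoid_scheme \<Rightarrow> 'a set" where
  "cube_roots G = {x\<in>carrier G. x [^]\<^bsub>G\<^esub> (3::nat) = \<one>\<^bsub>G\<^esub>}"

definition k_large :: "('a, 'b) monoid_scheme \<Rightarrow> nat \<Rightarrow> 'a set \<Rightarrow> bool" where
  "k_large G k X \<longleftrightarrow>
     (\<forall>g. (\<forall>i<k. g i \<in> carrier G) \<longrightarrow> (\<Inter>i<k. l_coset G (g i) X) \<noteq> {})"

definition set_algebra :: "'a set \<Rightarrow> 'a set set \<Rightarrow> bool" where
  "set_algebra \<Omega> M \<longleftrightarrow> M \<subseteq> Pow \<Omega> \<and> {} \<in> M \<and>
     (\<forall>A\<in>M. \<Omega> - A \<in> M) \<and> (\<forall>A\<in>M. \<forall>B\<in>M. A \<union> B \<in> M)"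

definition left_inv_prob_measure ::
    "('a, 'b) monoid_scheme \<Rightarrow> 'a set set \<Rightarrow> ('a set \<Rightarrow> real) \<Rightarrow> bool" where
  "left_inv_prob_measure G M \<mu> \<longleftrightarrow>
     set_algebra (carrier G) M \<and>
     (\<forall>A\<in>M. 0 \<le> \<mu> A) \<and>
     \<mu> (carrier G) = 1 \<and>
     (\<forall>A\<in>M. \<forall>B\<in>M. A \<inter> B = {} \<longrightarrow> \<mu> (A \<union> B) = \<mu> A + \<mu> B) \<and>
     (\<forall>g\<in>carrier G. \<forall>A\<in>M. l_coset G g A \<in> M \<and> \<mu> (l_coset G g A) = \<mu> A)"

definition inner_measure :: "'a set set \<Rightarrow> ('a set \<Rightarrow> real) \<Rightarrow> 'a set \<Rightarrow> real" where
  "inner_measure M \<mu> X = Sup {\<mu> Y | Y. Y \<in> M \<and> Y \<subseteq> X}"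

end

theory Submission
  imports Defs
begin

primrec wp :: "('a, 'b) monoid_scheme \<Rightarrow> 'a list \<Rightarrow> 'a" where
  "wp G [] = \<one>\<^bsub>G\<^esub>"
| "wp G (x # xs) = x \<otimes>\<^bsub>G\<^esub> wp G xs"

lemma (in monoid) wp_closed: "set xs \<subseteq> carrier G \<Longrightarrow> wp G xs \<in> carrier G"
  by (induct xs) auto

lemma (in monoid) wp_append:
  "set xs \<subseteq> carrier G \<Longrightarrow> set ys \<subseteq> carrier G \<Longrightarrow> wp G (xs @ ys) = wp G xs \<otimes> wp G ys"
  by (induct xs) (auto simp: m_assoc wp_closed)

lemma (in monoid) wp_rw:
  assumes "wp G l = wp G r" "W1 = xs @ l @ ys" "W2 = xs @ r @ ys"
    "set W1 \<subseteq> carrier G" "set W2 \<subseteq> carrier G"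
  shows "wp G W1 = wp G W2"
proof -
  have a: "set xs \<subseteq> carrier G" "set l \<subseteq> carrier G" "set ys \<subseteq> carrier G"
    using assms(2,4) by auto
  have b: "set r \<subseteq> carrier G" using assms(3,5) by auto
  show ?thesis using a b assms(1) unfolding assms(2,3)
    by (simp add: wp_append)
qed

lemma (in group) stepA_words:
  assumes uc: "u \<in> carrier G" and vc: "v \<in> carrier G" and wc: "w \<in> carrier G"
    and au: "wp G [u,u,u] = wp G []"
    and av: "wp G [v,v,v] = wp G []"
    and h0: "wp G [w,w,w] = wp G []"
    and h1: "wp G [u,w,u,w,u,w] = wp G []"
    and h2: "wp G [u,u,w,u,u,w,u,u,w] = wp G []"
    and h3: "wp G [v,w,v,w,v,w] = wp G []"
    and h4: "wp G [u,v,w,u,v,w,u,v,w] = wp G []"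
    and h5: "wp G [u,v,u,w,u,v,u,w,u,v,u,w] = wp G []"
    and h6: "wp G [v,u,w,v,u,w,v,u,w] = wp G []"
  shows "wp G [u,v,v,u,v] = wp G [v,v,u,v,u]"
proof -
  have e9: "wp G [v,u,w,v,u,w,v,u,w] = wp G []"
  proof -
    have "wp G [v,u,w,v,u,w,v,u,w] = wp G []"
      by (rule wp_rw[OF h6, where xs="[]" and ys="[]"]) (simp_all add: uc vc wc)
    then show ?thesis .
  qed
  have e10: "wp G [u,v,u,w,u,v,u,w,u,v,u,w] = wp G []"
  proof -
    have "wp G [u,v,u,w,u,v,u,w,u,v,u,w] = wp G []"
      by (rule wp_rw[OF h5, where xs="[]" and ys="[]"]) (simp_all add: uc vc wc)
    then show ?thesis .
  qed
  have e11: "wp G [u,v,w,u,v,w,u,v,w] = wp G []"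
  proof -
    have "wp G [u,v,w,u,v,w,u,v,w] = wp G []"
      by (rule wp_rw[OF h4, where xs="[]" and ys="[]"]) (simp_all add: uc vc wc)
    then show ?thesis .
  qed
  have e12: "wp G [v,w,v,w,v,w] = wp G []"
  proof -
    have "wp G [v,w,v,w,v,w] = wp G []"
      by (rule wp_rw[OF h3, where xs="[]" and ys="[]"]) (simp_all add: uc vc wc)
    then show ?thesis .
  qed
  have e13: "wp G [u,u,w,u,u,w,u,u,w] = wp G []"
  proof -
    have "wp G [u,u,w,u,u,w,u,u,w] = wp G []"
      by (rule wp_rw[OF h2, where xs="[]" and ys="[]"]) (simp_all add: uc vc wc)
    then show ?thesis .
  qed
  have e14: "wp G [u,w,u,w,u,w] = wp G []"
  proof -
    have "wp G [u,w,u,w,u,w] = wp G []"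
      by (rule wp_rw[OF h1, where xs="[]" and ys="[]"]) (simp_all add: uc vc wc)
    then show ?thesis .
  qed
  have e15: "wp G [w,w,w] = wp G []"
  proof -
    have "wp G [w,w,w] = wp G []"
      by (rule wp_rw[OF h0, where xs="[]" and ys="[]"]) (simp_all add: uc vc wc)
    then show ?thesis .
  qed
  have e16: "wp G [v,v,v] = wp G []"
  proof -
    have "wp G [v,v,v] = wp G []"
      by (rule wp_rw[OF av, where xs="[]" and ys="[]"]) (simp_all add: uc vc wc)
    then show ?thesis .
  qed
  have e17: "wp G [u,u,u] = wp G []"
  proof -
    have "wp G [u,u,u] = wp G []"
      by (rule wp_rw[OF au, where xs="[]" and ys="[]"]) (simp_all add: uc vc wc)
    then show ?thesis .
  qed
  have e18: "wp G [w,u,w,u,w] = wp G [u,u]"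
  proof -
    have "wp G [w,u,w,u,w] = wp G [u,u,u,w,u,w,u,w]"
      by (rule wp_rw[OF e17[symmetric], where xs="[]" and ys="[w,u,w,u,w]"]) (simp_all add: uc vc wc)
    also have "... = wp G [u,u]"
      by (rule wp_rw[OF e14, where xs="[u,u]" and ys="[]"]) (simp_all add: uc vc wc)
    finally show ?thesis .
  qed
  have e19: "wp G [w,u,u,w,u,u,w] = wp G [u]"
  proof -
    have "wp G [w,u,u,w,u,u,w] = wp G [u,u,u,w,u,u,w,u,u,w]"
      by (rule wp_rw[OF e17[symmetric], where xs="[]" and ys="[w,u,u,w,u,u,w]"]) (simp_all add: uc vc wc)
    also have "... = wp G [u]"
      by (rule wp_rw[OF e13, where xs="[u]" and ys="[]"]) (simp_all add: uc vc wc)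
    finally show ?thesis .
  qed
  have e21: "wp G [v,u,w,u,v,u,w,u,v,u,w] = wp G [u,u]"
  proof -
    have "wp G [v,u,w,u,v,u,w,u,v,u,w] = wp G [u,u,u,v,u,w,u,v,u,w,u,v,u,w]"
      by (rule wp_rw[OF e17[symmetric], where xs="[]" and ys="[v,u,w,u,v,u,w,u,v,u,w]"]) (simp_all add: uc vc wc)
    also have "... = wp G [u,u]"
      by (rule wp_rw[OF e10, where xs="[u,u]" and ys="[]"]) (simp_all add: uc vc wc)
    finally show ?thesis .
  qed
  have e22: "wp G [w,v,w,v,w] = wp G [v,v]"
  proof -
    have "wp G [w,v,w,v,w] = wp G [v,v,v,w,v,w,v,w]"
      by (rule wp_rw[OF e16[symmetric], where xs="[]" and ys="[w,v,w,v,w]"]) (simp_all add: uc vc wc)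
    also have "... = wp G [v,v]"
      by (rule wp_rw[OF e12, where xs="[v,v]" and ys="[]"]) (simp_all add: uc vc wc)
    finally show ?thesis .
  qed
  have e27: "wp G [v,w,v,w,v] = wp G [w,w]"
  proof -
    have "wp G [v,w,v,w,v] = wp G [v,w,v,w,v,w,w,w]"
      by (rule wp_rw[OF e15[symmetric], where xs="[v,w,v,w,v]" and ys="[]"]) (simp_all add: uc vc wc)
    also have "... = wp G [w,w]"
      by (rule wp_rw[OF e12, where xs="[]" and ys="[w,w]"]) (simp_all add: uc vc wc)
    finally show ?thesis .
  qed
  have e29: "wp G [u,v,w,u,v,w,u] = wp G [v,w,v,w]"
  proof -
    have "wp G [u,v,w,u,v,w,u] = wp G [u,v,w,u,v,w,u,v,w,v,w,v,w]"
      by (rule wp_rw[OF e12[symmetric], where xs="[u,v,w,u,v,w,u]" and ys="[]"]) (simp_all add: uc vc wc)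
    also have "... = wp G [v,w,v,w]"
      by (rule wp_rw[OF e11, where xs="[]" and ys="[v,w,v,w]"]) (simp_all add: uc vc wc)
    finally show ?thesis .
  qed
  have e31: "wp G [u,v,u,w,u,v,u,w,u,v] = wp G [u,w,u,w]"
  proof -
    have "wp G [u,v,u,w,u,v,u,w,u,v] = wp G [u,v,u,w,u,v,u,w,u,v,u,w,u,w,u,w]"
      by (rule wp_rw[OF e14[symmetric], where xs="[u,v,u,w,u,v,u,w,u,v]" and ys="[]"]) (simp_all add: uc vc wc)
    also have "... = wp G [u,w,u,w]"
      by (rule wp_rw[OF e10, where xs="[]" and ys="[u,w,u,w]"]) (simp_all add: uc vc wc)
    finally show ?thesis .
  qed
  have e33: "wp G [v,u,w,v,u,w,v] = wp G [u,w,u,w]"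
  proof -
    have "wp G [v,u,w,v,u,w,v] = wp G [v,u,w,v,u,w,v,u,w,u,w,u,w]"
      by (rule wp_rw[OF e14[symmetric], where xs="[v,u,w,v,u,w,v]" and ys="[]"]) (simp_all add: uc vc wc)
    also have "... = wp G [u,w,u,w]"
      by (rule wp_rw[OF e9, where xs="[]" and ys="[u,w,u,w]"]) (simp_all add: uc vc wc)
    finally show ?thesis .
  qed
  have e37: "wp G [v,u,w,v,u,w] = wp G [u,w,u,w,v,v]"
  proof -
    have "wp G [v,u,w,v,u,w] = wp G [v,u,w,v,u,w,v,v,v]"
      by (rule wp_rw[OF e16[symmetric], where xs="[v,u,w,v,u,w]" and ys="[]"]) (simp_all add: uc vc wc)
    also have "... = wp G [u,w,u,w,v,v]"
      by (rule wp_rw[OF e33, where xs="[]" and ys="[v,v]"]) (simp_all add: uc vc wc)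
    finally show ?thesis .
  qed
  have e46: "wp G [w,w,u,w,u,v,u,w,u,v] = wp G [u,v,w,u,v,u,u]"
  proof -
    have "wp G [w,w,u,w,u,v,u,w,u,v] = wp G [v,w,v,w,v,u,w,u,v,u,w,u,v]"
      by (rule wp_rw[OF e27[symmetric], where xs="[]" and ys="[u,w,u,v,u,w,u,v]"]) (simp_all add: uc vc wc)
    also have "... = wp G [u,v,w,u,v,w,u,v,u,w,u,v,u,w,u,v]"
      by (rule wp_rw[OF e29[symmetric], where xs="[]" and ys="[v,u,w,u,v,u,w,u,v]"]) (simp_all add: uc vc wc)
    also have "... = wp G [u,v,w,u,v,w,u,w,u,w]"
      by (rule wp_rw[OF e31, where xs="[u,v,w,u,v,w]" and ys="[]"]) (simp_all add: uc vc wc)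
    also have "... = wp G [u,v,w,u,v,u,u]"
      by (rule wp_rw[OF e18, where xs="[u,v,w,u,v]" and ys="[]"]) (simp_all add: uc vc wc)
    finally show ?thesis .
  qed
  have e73: "wp G [w,v,w,v] = wp G [v,v,w,w]"
  proof -
    have "wp G [w,v,w,v] = wp G [w,v,w,v,w,w,w]"
      by (rule wp_rw[OF e15[symmetric], where xs="[w,v,w,v]" and ys="[]"]) (simp_all add: uc vc wc)
    also have "... = wp G [v,v,w,w]"
      by (rule wp_rw[OF e22, where xs="[]" and ys="[w,w]"]) (simp_all add: uc vc wc)
    finally show ?thesis .
  qed
  have e77: "wp G [v,u,w,u,v,u,w,u,v] = wp G [w,u,w]"
  proof -
    have "wp G [v,u,w,u,v,u,w,u,v] = wp G [v,u,w,u,v,u,w,u,v,u,u,u]"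
      by (rule wp_rw[OF e17[symmetric], where xs="[v,u,w,u,v,u,w,u,v]" and ys="[]"]) (simp_all add: uc vc wc)
    also have "... = wp G [v,u,w,u,v,u,w,u,v,u,w,u,w,u,w]"
      by (rule wp_rw[OF e18[symmetric], where xs="[v,u,w,u,v,u,w,u,v,u]" and ys="[]"]) (simp_all add: uc vc wc)
    also have "... = wp G [u,u,u,w,u,w]"
      by (rule wp_rw[OF e21, where xs="[]" and ys="[u,w,u,w]"]) (simp_all add: uc vc wc)
    also have "... = wp G [w,u,w]"
      by (rule wp_rw[OF e17, where xs="[]" and ys="[w,u,w]"]) (simp_all add: uc vc wc)
    finally show ?thesis .
  qed
  have e78: "wp G [w,u,w,u] = wp G [u,u,w,w]"
  proof -
    have "wp G [w,u,w,u] = wp G [v,u,w,u,v,u,w,u,v,u]"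
      by (rule wp_rw[OF e77[symmetric], where xs="[]" and ys="[u]"]) (simp_all add: uc vc wc)
    also have "... = wp G [v,u,w,u,v,u,w,u,v,u,w,w,w]"
      by (rule wp_rw[OF e15[symmetric], where xs="[v,u,w,u,v,u,w,u,v,u]" and ys="[]"]) (simp_all add: uc vc wc)
    also have "... = wp G [u,u,w,w]"
      by (rule wp_rw[OF e21, where xs="[]" and ys="[w,w]"]) (simp_all add: uc vc wc)
    finally show ?thesis .
  qed
  have e81: "wp G [w,u,u,w,w,v,u,w,u,v] = wp G [u,v,w,u,v,u,u]"
  proof -
    have "wp G [w,u,u,w,w,v,u,w,u,v] = wp G [w,w,u,w,u,v,u,w,u,v]"
      by (rule wp_rw[OF e78[symmetric], where xs="[w]" and ys="[v,u,w,u,v]"]) (simp_all add: uc vc wc)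
    also have "... = wp G [u,v,w,u,v,u,u]"
      by (rule wp_rw[OF e46, where xs="[]" and ys="[]"]) (simp_all add: uc vc wc)
    finally show ?thesis .
  qed
  have e90: "wp G [w,u,u,w,u] = wp G [u,u,w,u,w]"
  proof -
    have "wp G [w,u,u,w,u] = wp G [w,u,u,w,u,u,u,u]"
      by (rule wp_rw[OF e17[symmetric], where xs="[w,u,u,w]" and ys="[u]"]) (simp_all add: uc vc wc)
    also have "... = wp G [w,u,u,w,u,u,w,u,w,u,w]"
      by (rule wp_rw[OF e18[symmetric], where xs="[w,u,u,w,u,u]" and ys="[]"]) (simp_all add: uc vc wc)
    also have "... = wp G [u,u,w,u,w]"
      by (rule wp_rw[OF e19, where xs="[]" and ys="[u,w,u,w]"]) (simp_all add: uc vc wc)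
    finally show ?thesis .
  qed
  have e131: "wp G [w,v,w,u,v,u,u] = wp G [u,w,v,u,w,u,v]"
  proof -
    have "wp G [w,v,w,u,v,u,u] = wp G [w,u,u,u,v,w,u,v,u,u]"
      by (rule wp_rw[OF e17[symmetric], where xs="[w]" and ys="[v,w,u,v,u,u]"]) (simp_all add: uc vc wc)
    also have "... = wp G [w,u,u,w,u,u,w,w,v,u,w,u,v]"
      by (rule wp_rw[OF e81[symmetric], where xs="[w,u,u]" and ys="[]"]) (simp_all add: uc vc wc)
    also have "... = wp G [u,u,w,u,w,u,w,w,v,u,w,u,v]"
      by (rule wp_rw[OF e90, where xs="[]" and ys="[u,w,w,v,u,w,u,v]"]) (simp_all add: uc vc wc)
    also have "... = wp G [u,u,u,u,w,w,w,w,v,u,w,u,v]"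
      by (rule wp_rw[OF e78, where xs="[u,u]" and ys="[w,w,v,u,w,u,v]"]) (simp_all add: uc vc wc)
    also have "... = wp G [u,u,u,u,w,v,u,w,u,v]"
      by (rule wp_rw[OF e15, where xs="[u,u,u,u]" and ys="[w,v,u,w,u,v]"]) (simp_all add: uc vc wc)
    also have "... = wp G [u,w,v,u,w,u,v]"
      by (rule wp_rw[OF e17, where xs="[]" and ys="[u,w,v,u,w,u,v]"]) (simp_all add: uc vc wc)
    finally show ?thesis .
  qed
  have e2085: "wp G [v,v,u,v,u,u] = wp G [u,u,v,v,u,v]"
  proof -
    have "wp G [v,v,u,v,u,u] = wp G [v,v,w,w,w,u,v,u,u]"
      by (rule wp_rw[OF e15[symmetric], where xs="[v,v]" and ys="[u,v,u,u]"]) (simp_all add: uc vc wc)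
    also have "... = wp G [w,v,w,v,w,u,v,u,u]"
      by (rule wp_rw[OF e73[symmetric], where xs="[]" and ys="[w,u,v,u,u]"]) (simp_all add: uc vc wc)
    also have "... = wp G [w,v,u,w,v,u,w,u,v]"
      by (rule wp_rw[OF e131, where xs="[w,v]" and ys="[]"]) (simp_all add: uc vc wc)
    also have "... = wp G [w,u,w,u,w,v,v,u,v]"
      by (rule wp_rw[OF e37, where xs="[w]" and ys="[u,v]"]) (simp_all add: uc vc wc)
    also have "... = wp G [u,u,w,w,w,v,v,u,v]"
      by (rule wp_rw[OF e78, where xs="[]" and ys="[w,v,v,u,v]"]) (simp_all add: uc vc wc)
    also have "... = wp G [u,u,v,v,u,v]"
      by (rule wp_rw[OF e15, where xs="[u,u]" and ys="[v,v,u,v]"]) (simp_all add: uc vc wc)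
    finally show ?thesis .
  qed
  have e2575: "wp G [v,v,u,v,u] = wp G [u,v,v,u,v]"
  proof -
    have "wp G [v,v,u,v,u] = wp G [v,v,u,v,u,u,u,u]"
      by (rule wp_rw[OF e17[symmetric], where xs="[v,v,u,v,u]" and ys="[]"]) (simp_all add: uc vc wc)
    also have "... = wp G [u,u,v,v,u,v,u,u]"
      by (rule wp_rw[OF e2085, where xs="[]" and ys="[u,u]"]) (simp_all add: uc vc wc)
    also have "... = wp G [u,u,u,u,v,v,u,v]"
      by (rule wp_rw[OF e2085, where xs="[u,u]" and ys="[]"]) (simp_all add: uc vc wc)
    also have "... = wp G [u,v,v,u,v]"
      by (rule wp_rw[OF e17, where xs="[]" and ys="[u,v,v,u,v]"]) (simp_all add: uc vc wc)
    finally show ?thesis .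
  qed
  show ?thesis
  proof -
    have "wp G [u,v,v,u,v] = wp G [v,v,u,v,u]"
      by (rule wp_rw[OF e2575[symmetric], where xs="[]" and ys="[]"]) (simp_all add: uc vc wc)
    then show ?thesis .
  qed
qed

lemma (in group) stepB_words:
  assumes pc: "p \<in> carrier G" and zc: "z \<in> carrier G"
    and ap: "wp G [p,p,p] = wp G []"
    and az: "wp G [z,z,z] = wp G []"
    and cp: "wp G [p,z,z,p,z] = wp G [z,z,p,z,p]"
    and cz: "wp G [z,p,p,z,p] = wp G [p,p,z,p,z]"
  shows "wp G [p,z,p,z,p,z] = wp G []"
proof -
  have e4: "wp G [z,p,p,z,p] = wp G [p,p,z,p,z]"
  proof -
    have "wp G [z,p,p,z,p] = wp G [p,p,z,p,z]"
      by (rule wp_rw[OF cz, where xs="[]" and ys="[]"]) (simp_all add: pc zc)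
    then show ?thesis .
  qed
  have e5: "wp G [z,z,p,z,p] = wp G [p,z,z,p,z]"
  proof -
    have "wp G [z,z,p,z,p] = wp G [p,z,z,p,z]"
      by (rule wp_rw[OF cp[symmetric], where xs="[]" and ys="[]"]) (simp_all add: pc zc)
    then show ?thesis .
  qed
  have e6: "wp G [z,z,z] = wp G []"
  proof -
    have "wp G [z,z,z] = wp G []"
      by (rule wp_rw[OF az, where xs="[]" and ys="[]"]) (simp_all add: pc zc)
    then show ?thesis .
  qed
  have e7: "wp G [p,p,p] = wp G []"
  proof -
    have "wp G [p,p,p] = wp G []"
      by (rule wp_rw[OF ap, where xs="[]" and ys="[]"]) (simp_all add: pc zc)
    then show ?thesis .
  qed
  have e9: "wp G [p,p,z,z,p,z,z,p] = wp G [p,z]"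
  proof -
    have "wp G [p,p,z,z,p,z,z,p] = wp G [p,z,z,p,z,p,z,p]"
      by (rule wp_rw[OF e5[symmetric], where xs="[p]" and ys="[z,p]"]) (simp_all add: pc zc)
    also have "... = wp G [z,z,p,z,p,p,z,p]"
      by (rule wp_rw[OF e5[symmetric], where xs="[]" and ys="[p,z,p]"]) (simp_all add: pc zc)
    also have "... = wp G [z,z,p,p,p,z,p,z]"
      by (rule wp_rw[OF e4, where xs="[z,z,p]" and ys="[]"]) (simp_all add: pc zc)
    also have "... = wp G [z,z,z,p,z]"
      by (rule wp_rw[OF e7, where xs="[z,z]" and ys="[z,p,z]"]) (simp_all add: pc zc)
    also have "... = wp G [p,z]"
      by (rule wp_rw[OF e6, where xs="[]" and ys="[p,z]"]) (simp_all add: pc zc)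
    finally show ?thesis .
  qed
  have e10: "wp G [p,p,z,p,z,p,p] = wp G [z,p,p,z]"
  proof -
    have "wp G [p,p,z,p,z,p,p] = wp G [z,p,p,z,p,p,p]"
      by (rule wp_rw[OF e4[symmetric], where xs="[]" and ys="[p,p]"]) (simp_all add: pc zc)
    also have "... = wp G [z,p,p,z]"
      by (rule wp_rw[OF e7, where xs="[z,p,p,z]" and ys="[]"]) (simp_all add: pc zc)
    finally show ?thesis .
  qed
  have e11: "wp G [p,p,z,p,z,p,z,p] = wp G [z,p,z,p,z]"
  proof -
    have "wp G [p,p,z,p,z,p,z,p] = wp G [z,p,p,z,p,p,z,p]"
      by (rule wp_rw[OF e4[symmetric], where xs="[]" and ys="[p,z,p]"]) (simp_all add: pc zc)
    also have "... = wp G [z,p,p,p,p,z,p,z]"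
      by (rule wp_rw[OF e4, where xs="[z,p,p]" and ys="[]"]) (simp_all add: pc zc)
    also have "... = wp G [z,p,z,p,z]"
      by (rule wp_rw[OF e7, where xs="[z]" and ys="[p,z,p,z]"]) (simp_all add: pc zc)
    finally show ?thesis .
  qed
  have e20: "wp G [p,p,z,p,z,p,z] = wp G [p]"
  proof -
    have "wp G [p,p,z,p,z,p,z] = wp G [p,p,z,p,z,p,p,z,z,p,z,z,p]"
      by (rule wp_rw[OF e9[symmetric], where xs="[p,p,z,p,z]" and ys="[]"]) (simp_all add: pc zc)
    also have "... = wp G [z,p,p,z,z,z,p,z,z,p]"
      by (rule wp_rw[OF e10, where xs="[]" and ys="[z,z,p,z,z,p]"]) (simp_all add: pc zc)
    also have "... = wp G [z,p,p,p,z,z,p]"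
      by (rule wp_rw[OF e6, where xs="[z,p,p]" and ys="[p,z,z,p]"]) (simp_all add: pc zc)
    also have "... = wp G [z,z,z,p]"
      by (rule wp_rw[OF e7, where xs="[z]" and ys="[z,z,p]"]) (simp_all add: pc zc)
    also have "... = wp G [p]"
      by (rule wp_rw[OF e6, where xs="[]" and ys="[p]"]) (simp_all add: pc zc)
    finally show ?thesis .
  qed
  have e26: "wp G [z,p,z,p,z] = wp G [p,p]"
  proof -
    have "wp G [z,p,z,p,z] = wp G [p,p,z,p,z,p,z,p]"
      by (rule wp_rw[OF e11[symmetric], where xs="[]" and ys="[]"]) (simp_all add: pc zc)
    also have "... = wp G [p,p]"
      by (rule wp_rw[OF e20, where xs="[]" and ys="[p]"]) (simp_all add: pc zc)
    finally show ?thesis .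
  qed
  show ?thesis
  proof -
    have "wp G [p,z,p,z,p,z] = wp G [p,p,p]"
      by (rule wp_rw[OF e26, where xs="[p]" and ys="[]"]) (simp_all add: pc zc)
    also have "... = wp G []"
      by (rule wp_rw[OF e7, where xs="[]" and ys="[]"]) (simp_all add: pc zc)
    finally show ?thesis .
  qed
qed


lemma (in group) cube_expand: "x \<in> carrier G \<Longrightarrow> x [^] (3::nat) = x \<otimes> (x \<otimes> x)"
  by (simp add: numeral_3_eq_3 m_assoc)

lemma (in group) inv_cube: "x \<in> carrier G \<Longrightarrow> x [^] (3::nat) = \<one> \<Longrightarrow> inv x = x \<otimes> x"
proof -
  assume x: "x \<in> carrier G" and c: "x [^] (3::nat) = \<one>"
  have "(x \<otimes> x) \<otimes> x = \<one>" using c x by (simp add: cube_expand m_assoc)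
  thus ?thesis using x by (simp add: inv_equality)
qed

lemma (in group) stepA:
  assumes uc: "u \<in> carrier G" and vc: "v \<in> carrier G" and wc: "w \<in> carrier G"
    and cu: "u [^] (3::nat) = \<one>" and cv: "v [^] (3::nat) = \<one>" and cw: "w [^] (3::nat) = \<one>"
    and c1: "(u \<otimes> w) [^] (3::nat) = \<one>" and c2: "(inv u \<otimes> w) [^] (3::nat) = \<one>"
    and c3: "(v \<otimes> w) [^] (3::nat) = \<one>" and c4: "(u \<otimes> v \<otimes> w) [^] (3::nat) = \<one>"
    and c5: "(u \<otimes> v \<otimes> u \<otimes> w) [^] (3::nat) = \<one>" and c6: "(v \<otimes> u \<otimes> w) [^] (3::nat) = \<one>"
  shows "u \<otimes> (v \<otimes> v \<otimes> u \<otimes> v) = (v \<otimes> v \<otimes> u \<otimes> v) \<otimes> u"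
proof -
  have iu: "inv u = u \<otimes> u" using inv_cube uc cu by blast
  have f1: "wp G [u,u,u] = wp G []" using cu uc by (simp add: cube_expand)
  have f2: "wp G [v,v,v] = wp G []" using cv vc by (simp add: cube_expand)
  have f3: "wp G [w,w,w] = wp G []" using cw wc by (simp add: cube_expand)
  have f4: "wp G [u,w,u,w,u,w] = wp G []" using c1 uc wc by (simp add: cube_expand m_assoc)
  have f5: "wp G [u,u,w,u,u,w,u,u,w] = wp G []" using c2 uc wc by (simp add: iu cube_expand m_assoc)
  have f6: "wp G [v,w,v,w,v,w] = wp G []" using c3 vc wc by (simp add: cube_expand m_assoc)
  have f7: "wp G [u,v,w,u,v,w,u,v,w] = wp G []" using c4 uc vc wc by (simp add: cube_expand m_assoc)
  have f8: "wp G [u,v,u,w,u,v,u,w,u,v,u,w] = wp G []" using c5 uc vc wc by (simp add: cube_expand m_assoc)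
  have f9: "wp G [v,u,w,v,u,w,v,u,w] = wp G []" using c6 uc vc wc by (simp add: cube_expand m_assoc)
  have "wp G [u,v,v,u,v] = wp G [v,v,u,v,u]"
    by (rule stepA_words[OF uc vc wc f1 f2 f3 f4 f5 f6 f7 f8 f9])
  thus ?thesis using uc vc by (simp add: m_assoc)
qed

lemma (in group) stepB:
  assumes pc: "p \<in> carrier G" and zc: "z \<in> carrier G"
    and cp: "p [^] (3::nat) = \<one>" and cz: "z [^] (3::nat) = \<one>"
    and e1: "p \<otimes> (z \<otimes> z \<otimes> p \<otimes> z) = (z \<otimes> z \<otimes> p \<otimes> z) \<otimes> p"
    and e2: "z \<otimes> (p \<otimes> p \<otimes> z \<otimes> p) = (p \<otimes> p \<otimes> z \<otimes> p) \<otimes> z"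
  shows "(p \<otimes> z) [^] (3::nat) = \<one>"
proof -
  have f1: "wp G [p,p,p] = wp G []" using cp pc by (simp add: cube_expand)
  have f2: "wp G [z,z,z] = wp G []" using cz zc by (simp add: cube_expand)
  have f3: "wp G [p,z,z,p,z] = wp G [z,z,p,z,p]" using e1 pc zc by (simp add: m_assoc)
  have f4: "wp G [z,p,p,z,p] = wp G [p,p,z,p,z]" using e2 pc zc by (simp add: m_assoc)
  have "wp G [p,z,p,z,p,z] = wp G []"
    by (rule stepB_words[OF pc zc f1 f2 f3 f4])
  thus ?thesis using pc zc by (simp add: cube_expand m_assoc)
qed


lemma (in group) comm_trivial:
  assumes a: "a \<in> carrier G" and b: "b \<in> carrier G"
    and h: "inv a \<otimes> inv b \<otimes> a \<otimes> b = \<one>"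
  shows "a \<otimes> b = b \<otimes> a"
proof -
  have "b \<otimes> a \<otimes> (inv a \<otimes> inv b \<otimes> a \<otimes> b) = b \<otimes> a"
    using h a b by simp
  moreover have "b \<otimes> a \<otimes> (inv a \<otimes> inv b \<otimes> a \<otimes> b) = a \<otimes> b"
    using a b by (simp add: m_assoc[symmetric]) (simp add: m_assoc)
  ultimately show ?thesis by simp
qed

lemma (in group) commute_inv:
  assumes a: "a \<in> carrier G" and b: "b \<in> carrier G" and h: "a \<otimes> b = b \<otimes> a"
  shows "inv a \<otimes> b = b \<otimes> inv a"
proof -
  have "inv a \<otimes> b = inv a \<otimes> (b \<otimes> a) \<otimes> inv a" using a b by (simp add: m_assoc)
  also have "... = inv a \<otimes> (a \<otimes> b) \<otimes> inv a" by (simp add: h)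
  also have "... = b \<otimes> inv a" using a b by (simp add: m_assoc[symmetric])
  finally show ?thesis .
qed

lemma (in group) engel_comm:
  assumes x: "x \<in> carrier G" and y: "y \<in> carrier G"
    and h: "comm G (comm G x y) y = \<one>"
  shows "y \<otimes> (inv x \<otimes> y \<otimes> x) = (inv x \<otimes> y \<otimes> x) \<otimes> y"
proof -
  define q where "q = inv x \<otimes> inv y \<otimes> x"
  have q: "q \<in> carrier G" using x y by (simp add: q_def)
  have c: "comm G x y = q \<otimes> y" by (simp add: comm_def q_def)
  have h': "inv (q \<otimes> y) \<otimes> inv y \<otimes> (q \<otimes> y) \<otimes> y = \<one>"
    using h by (simp only: q_def comm_def)
  have "(q \<otimes> y) \<otimes> y = y \<otimes> (q \<otimes> y)"
    by (rule comm_trivial[OF _ y h']) (use q y in simp)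
  hence "(q \<otimes> y) \<otimes> y = (y \<otimes> q) \<otimes> y" using q y by (simp add: m_assoc)
  hence qy: "q \<otimes> y = y \<otimes> q" using q y by (metis m_closed right_cancel)
  have iq: "inv q = inv x \<otimes> y \<otimes> x" using x y by (simp add: q_def inv_mult_group m_assoc)
  have "inv q \<otimes> y = y \<otimes> inv q" using commute_inv[OF q y qy] .
  thus ?thesis by (simp add: iq)
qed

lemma (in group) lcoset_mem:
  assumes a: "a \<in> carrier G" and X: "X \<subseteq> carrier G" and w: "w \<in> inv a <# X"
  shows "a \<otimes> w \<in> X"
proof -
  obtain x where x: "x \<in> X" and wx: "w = inv a \<otimes> x" using w unfolding l_coset_def by blast
  have "a \<otimes> w = x" using a x X by (auto simp: wx m_assoc[symmetric])
  thus ?thesis using x by simp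
qed

lemma (in group) cube_roots_inv:
  "x \<in> cube_roots G \<Longrightarrow> inv x \<in> cube_roots G"
  by (simp add: cube_roots_def nat_pow_inv)

lemma (in group) cube_roots_sub: "cube_roots G \<subseteq> carrier G"
  by (auto simp: cube_roots_def)

lemma (in group) product_cube:
  assumes p: "p \<in> cube_roots G" and z: "z \<in> cube_roots G"
    and e1: "p \<otimes> (inv z \<otimes> p \<otimes> z) = (inv z \<otimes> p \<otimes> z) \<otimes> p"
    and e2: "z \<otimes> (inv p \<otimes> z \<otimes> p) = (inv p \<otimes> z \<otimes> p) \<otimes> z"
  shows "(p \<otimes> z) [^] (3::nat) = \<one>"
proof -
  have pc: "p \<in> carrier G" and cp: "p [^] (3::nat) = \<one>" using p by (auto simp: cube_roots_def)
  have zc: "z \<in> carrier G" and cz: "z [^] (3::nat) = \<one>" using z by (auto simp: cube_roots_def)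
  have ip: "inv p = p \<otimes> p" using inv_cube pc cp by blast
  have iz: "inv z = z \<otimes> z" using inv_cube zc cz by blast
  show ?thesis
    by (rule stepB[OF pc zc cp cz]) (use e1 e2 in \<open>simp_all add: ip iz\<close>)
qed

lemma (in group) large_commute:
  assumes L: "k_large G 7 (cube_roots G)"
    and u: "u \<in> cube_roots G" and v: "v \<in> cube_roots G"
  shows "u \<otimes> (inv v \<otimes> u \<otimes> v) = (inv v \<otimes> u \<otimes> v) \<otimes> u"
proof -
  let ?X = "cube_roots G"
  have uc: "u \<in> carrier G" and cu: "u [^] (3::nat) = \<one>" using u by (auto simp: cube_roots_def)
  have vc: "v \<in> carrier G" and cv: "v [^] (3::nat) = \<one>" using v by (auto simp: cube_roots_def)
  define hs where "hs = [\<one>, u, inv u, v, u \<otimes> v, u \<otimes> v \<otimes> u, v \<otimes> u]"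
  have hsc: "\<And>i. i < 7 \<Longrightarrow> hs ! i \<in> carrier G"
  proof -
    fix i :: nat assume "i < 7"
    hence "i \<in> {0,1,2,3,4,5,6}" by auto
    thus "hs ! i \<in> carrier G" using uc vc by (auto simp: hs_def)
  qed
  define g where "g = (\<lambda>i. inv (hs ! i))"
  have "\<forall>i<7. g i \<in> carrier G" using hsc by (simp add: g_def)
  hence "(\<Inter>i<7. l_coset G (g i) ?X) \<noteq> {}" using L unfolding k_large_def by blast
  then obtain w where w: "\<And>i. i < 7 \<Longrightarrow> w \<in> l_coset G (g i) ?X" by blast
  have hw: "\<And>i. i < 7 \<Longrightarrow> hs ! i \<otimes> w \<in> ?X"
    using lcoset_mem[OF hsc cube_roots_sub] w by (simp add: g_def)
  have wX: "w \<in> ?X" using w[of 0] cube_roots_sub by (auto simp: g_def hs_def l_coset_def)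
  hence wc: "w \<in> carrier G" and cw: "w [^] (3::nat) = \<one>"
    by (auto simp: cube_roots_def)
  have X: "\<And>x. x \<in> ?X \<Longrightarrow> x [^] (3::nat) = \<one>" by (simp add: cube_roots_def)
  have c1: "(u \<otimes> w) [^] (3::nat) = \<one>" using X[OF hw[of 1]] by (simp add: hs_def)
  have c2: "(inv u \<otimes> w) [^] (3::nat) = \<one>" using X[OF hw[of 2]] by (simp add: hs_def numeral_2_eq_2)
  have c3: "(v \<otimes> w) [^] (3::nat) = \<one>" using X[OF hw[of 3]] by (simp add: hs_def numeral_3_eq_3)
  have c4: "(u \<otimes> v \<otimes> w) [^] (3::nat) = \<one>" using X[OF hw[of 4]] by (simp add: hs_def eval_nat_numeral)
  have c5: "(u \<otimes> v \<otimes> u \<otimes> w) [^] (3::nat) = \<one>" using X[OF hw[of 5]] by (simp add: hs_def eval_nat_numeral)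
  have c6: "(v \<otimes> u \<otimes> w) [^] (3::nat) = \<one>" using X[OF hw[of 6]] by (simp add: hs_def eval_nat_numeral)
  have iv: "inv v = v \<otimes> v" using inv_cube vc cv by blast
  show ?thesis using stepA[OF uc vc wc cu cv cw c1 c2 c3 c4 c5 c6] by (simp add: iv)
qed

lemma (in group) large_exp3:
  assumes L: "k_large G 7 (cube_roots G)"
  shows "exponent3 G"
  unfolding exponent3_def
proof
  fix a assume a: "a \<in> carrier G"
  let ?X = "cube_roots G"
  define g where "g = (\<lambda>i::nat. if i = 0 then \<one> else a)"
  have "\<forall>i<7. g i \<in> carrier G" using a by (simp add: g_def)
  hence "(\<Inter>i<7. l_coset G (g i) ?X) \<noteq> {}" using L unfolding k_large_def by blast
  then obtain w where w: "\<And>i. i < 7 \<Longrightarrow> w \<in> l_coset G (g i) ?X" by blast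
  have w0: "w \<in> l_coset G (g 0) ?X" using w[of 0] by simp
  have w1: "w \<in> l_coset G (g 1) ?X" using w[of 1] by simp
  have wX: "w \<in> ?X" using w0 cube_roots_sub by (auto simp: g_def l_coset_def)
  obtain x where xX: "x \<in> ?X" and wx: "w = a \<otimes> x" using w1 by (auto simp: g_def l_coset_def)
  have xc: "x \<in> carrier G" using xX cube_roots_sub by auto
  have zX: "inv x \<in> ?X" using cube_roots_inv[OF xX] .
  have aw: "w \<otimes> inv x = a" using a xc by (simp add: wx m_assoc)
  have "(w \<otimes> inv x) [^] (3::nat) = \<one>"
    by (rule product_cube[OF wX zX large_commute[OF L wX zX] large_commute[OF L zX wX]])
  thus "a [^] (3::nat) = \<one>" by (simp add: aw)
qed



section \<open>Measure part\<close>

context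
  fixes G :: "('a, 'b) monoid_scheme" and M :: "'a set set" and \<mu> :: "'a set \<Rightarrow> real"
  assumes L: "left_inv_prob_measure G M \<mu>"
begin

lemma M_sub: "A \<in> M \<Longrightarrow> A \<subseteq> carrier G"
  using L by (auto simp: left_inv_prob_measure_def set_algebra_def)

lemma M_empty: "{} \<in> M"
  using L by (auto simp: left_inv_prob_measure_def set_algebra_def)

lemma M_compl: "A \<in> M \<Longrightarrow> carrier G - A \<in> M"
  using L by (auto simp: left_inv_prob_measure_def set_algebra_def)

lemma M_Un: "A \<in> M \<Longrightarrow> B \<in> M \<Longrightarrow> A \<union> B \<in> M"
  using L by (auto simp: left_inv_prob_measure_def set_algebra_def)

lemma M_carrier: "carrier G \<in> M"
  using M_compl[OF M_empty] by simp

lemma M_Int: "A \<in> M \<Longrightarrow> B \<in> M \<Longrightarrow> A \<inter> B \<in> M"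
proof -
  assume A: "A \<in> M" and B: "B \<in> M"
  have "A \<inter> B = carrier G - ((carrier G - A) \<union> (carrier G - B))"
    using M_sub[OF A] M_sub[OF B] by blast
  thus ?thesis using M_compl M_Un A B by metis
qed

lemma M_Diff: "A \<in> M \<Longrightarrow> B \<in> M \<Longrightarrow> A - B \<in> M"
proof -
  assume A: "A \<in> M" and B: "B \<in> M"
  have "A - B = A \<inter> (carrier G - B)" using M_sub[OF A] by blast
  thus ?thesis using M_Int M_compl A B by metis
qed

lemma mu_add: "A \<in> M \<Longrightarrow> B \<in> M \<Longrightarrow> A \<inter> B = {} \<Longrightarrow> \<mu> (A \<union> B) = \<mu> A + \<mu> B"
  using L by (auto simp: left_inv_prob_measure_def)

lemma mu_nonneg: "A \<in> M \<Longrightarrow> 0 \<le> \<mu> A"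
  using L by (auto simp: left_inv_prob_measure_def)

lemma mu_carrier: "\<mu> (carrier G) = 1"
  using L by (auto simp: left_inv_prob_measure_def)

lemma mu_transl: "g \<in> carrier G \<Longrightarrow> A \<in> M \<Longrightarrow> l_coset G g A \<in> M \<and> \<mu> (l_coset G g A) = \<mu> A"
  using L by (auto simp: left_inv_prob_measure_def)

lemma mu_empty: "\<mu> {} = 0"
  using mu_add[OF M_empty M_empty] by simp

lemma mu_compl: "A \<in> M \<Longrightarrow> \<mu> (carrier G - A) = 1 - \<mu> A"
proof -
  assume A: "A \<in> M"
  have "carrier G = A \<union> (carrier G - A)" using M_sub[OF A] by blast
  hence "\<mu> (carrier G) = \<mu> A + \<mu> (carrier G - A)"
    using mu_add[OF A M_compl[OF A]] by (metis Diff_disjoint)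
  thus ?thesis using mu_carrier by simp
qed

lemma mu_mono: "A \<in> M \<Longrightarrow> B \<in> M \<Longrightarrow> A \<subseteq> B \<Longrightarrow> \<mu> A \<le> \<mu> B"
proof -
  assume A: "A \<in> M" and B: "B \<in> M" and AB: "A \<subseteq> B"
  have "B = A \<union> (B - A)" using AB by blast
  hence "\<mu> B = \<mu> A + \<mu> (B - A)" using mu_add[OF A M_Diff[OF B A]] by (metis Diff_disjoint)
  thus ?thesis using mu_nonneg[OF M_Diff[OF B A]] by simp
qed

lemma mu_subadd: "A \<in> M \<Longrightarrow> B \<in> M \<Longrightarrow> \<mu> (A \<union> B) \<le> \<mu> A + \<mu> B"
proof -
  assume A: "A \<in> M" and B: "B \<in> M"
  have "A \<union> B = A \<union> (B - A)" by blast
  hence "\<mu> (A \<union> B) = \<mu> A + \<mu> (B - A)" using mu_add[OF A M_Diff[OF B A]] by (metis Diff_disjoint)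
  moreover have "\<mu> (B - A) \<le> \<mu> B" using mu_mono[OF M_Diff[OF B A] B] by blast
  ultimately show ?thesis by simp
qed

lemma mu_UN: "(\<forall>i<(n::nat). A i \<in> M) \<Longrightarrow> (\<Union>i<n. A i) \<in> M \<and> \<mu> (\<Union>i<n. A i) \<le> (\<Sum>i<n. \<mu> (A i))"
proof (induct n)
  case 0
  then show ?case using M_empty mu_empty by simp
next
  case (Suc n)
  hence IH: "(\<Union>i<n. A i) \<in> M" "\<mu> (\<Union>i<n. A i) \<le> (\<Sum>i<n. \<mu> (A i))" and An: "A n \<in> M" by auto
  have eq: "(\<Union>i<Suc n. A i) = A n \<union> (\<Union>i<n. A i)" by (auto simp: lessThan_Suc)
  show ?case unfolding eq
    using M_Un[OF An IH(1)] mu_subadd[OF An IH(1)] IH(2) by simp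
qed

lemma mu_le1: "A \<in> M \<Longrightarrow> \<mu> A \<le> 1"
  using mu_mono[OF _ M_carrier] M_sub mu_carrier by metis

lemma inner_le: "(\<And>Y. Y \<in> M \<Longrightarrow> Y \<subseteq> X \<Longrightarrow> \<mu> Y \<le> c) \<Longrightarrow> inner_measure M \<mu> X \<le> c"
  unfolding inner_measure_def
  by (rule cSup_least) (use M_empty in auto)

end

lemma (in group) engel_disjoint:
  assumes E: "two_Engel G" and a: "a \<in> carrier G" and na: "a [^] (3::nat) \<noteq> \<one>"
  shows "cube_roots G \<inter> l_coset G a (cube_roots G) = {}"
proof (rule ccontr)
  assume "cube_roots G \<inter> l_coset G a (cube_roots G) \<noteq> {}"
  then obtain w where wX: "w \<in> cube_roots G" and w1: "w \<in> l_coset G a (cube_roots G)" by blast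
  obtain x where xX: "x \<in> cube_roots G" and wx: "w = a \<otimes> x" using w1 by (auto simp: l_coset_def)
  have xc: "x \<in> carrier G" using xX cube_roots_sub by auto
  have wc: "w \<in> carrier G" using wX cube_roots_sub by auto
  have zX: "inv x \<in> cube_roots G" using cube_roots_inv[OF xX] .
  have zc: "inv x \<in> carrier G" using xc by simp
  have aw: "w \<otimes> inv x = a" using a xc by (simp add: wx m_assoc)
  have c1: "comm G (comm G (inv x) w) w = \<one>" using E wc zc by (simp add: two_Engel_def)
  have c2: "comm G (comm G w (inv x)) (inv x) = \<one>" using E wc zc by (simp add: two_Engel_def)
  have "(w \<otimes> inv x) [^] (3::nat) = \<one>"
    by (rule product_cube[OF wX zX engel_comm[OF zc wc c1] engel_comm[OF wc zc c2]])
  thus False using na by (simp add: aw)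
qed

theorem corollary4p5:
  fixes G :: "('a, 'b) monoid_scheme"
  assumes "group G"
  shows "(k_large G 7 (cube_roots G) \<longrightarrow> exponent3 G) \<and>
         (\<forall>M \<mu>. left_inv_prob_measure G M \<mu> \<longrightarrow> \<not> exponent3 G \<longrightarrow>
             inner_measure M \<mu> (cube_roots G) \<le> 6/7 \<and>
             (two_Engel G \<longrightarrow> inner_measure M \<mu> (cube_roots G) \<le> 1/2))"
proof -
  interpret group G by fact
  let ?X = "cube_roots G"
  have P1: "k_large G 7 ?X \<longrightarrow> exponent3 G" using large_exp3 by blast
  have P2: "inner_measure M \<mu> ?X \<le> 6/7 \<and> (two_Engel G \<longrightarrow> inner_measure M \<mu> ?X \<le> 1/2)"
    if L: "left_inv_prob_measure G M \<mu>" and ne: "\<not> exponent3 G" for M \<mu>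
  proof
    have nk: "\<not> k_large G 7 ?X" using P1 ne by blast
    have "\<exists>g. (\<forall>i<(7::nat). g i \<in> carrier G) \<and> (\<Inter>i<(7::nat). l_coset G (g i) ?X) = {}"
      using nk unfolding k_large_def by simp
    then obtain g where gc: "\<forall>i<(7::nat). g i \<in> carrier G"
      and emp: "(\<Inter>i<(7::nat). l_coset G (g i) ?X) = {}" by (elim exE conjE)
    show "inner_measure M \<mu> ?X \<le> 6/7"
    proof (rule inner_le[OF L])
      fix Y assume Y: "Y \<in> M" "Y \<subseteq> ?X"
      define A where "A = (\<lambda>i. carrier G - l_coset G (g i) Y)"
      have AM: "\<forall>i<(7::nat). A i \<in> M"
      proof (intro allI impI)
        fix i :: nat assume "i < 7"
        hence gi: "g i \<in> carrier G" using gc by blast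
        show "A i \<in> M" unfolding A_def using mu_transl[OF L gi Y(1)] M_compl[OF L] by blast
      qed
      have muA: "\<mu> (A i) = 1 - \<mu> Y" if i: "i < 7" for i
      proof -
        have gi: "g i \<in> carrier G" using gc i by blast
        show ?thesis unfolding A_def using mu_transl[OF L gi Y(1)] mu_compl[OF L] by simp
      qed
      have cov: "carrier G \<subseteq> (\<Union>i<(7::nat). A i)"
      proof
        fix x assume x: "x \<in> carrier G"
        show "x \<in> (\<Union>i<(7::nat). A i)"
        proof (rule ccontr)
          assume "x \<notin> (\<Union>i<(7::nat). A i)"
          hence "\<forall>i<(7::nat). x \<in> l_coset G (g i) Y" using x by (auto simp: A_def)
          hence "\<forall>i<(7::nat). x \<in> l_coset G (g i) ?X" using Y(2) unfolding l_coset_def by blast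
          hence "x \<in> (\<Inter>i<(7::nat). l_coset G (g i) ?X)" by blast
          thus False using emp by blast
        qed
      qed
      have "(\<Union>i<(7::nat). A i) \<subseteq> carrier G" by (auto simp: A_def)
      hence eqU: "(\<Union>i<(7::nat). A i) = carrier G" using cov by blast
      have "1 \<le> (\<Sum>i<7. \<mu> (A i))"
        using mu_UN[OF L AM] mu_carrier[OF L] by (simp add: eqU)
      also have "(\<Sum>i<7. \<mu> (A i)) = (\<Sum>i<(7::nat). 1 - \<mu> Y)"
        by (rule sum.cong) (auto simp: muA)
      also have "... = 7 * (1 - \<mu> Y)" by simp
      finally show "\<mu> Y \<le> 6/7" by (simp add: field_simps)
    qed
    show "two_Engel G \<longrightarrow> inner_measure M \<mu> ?X \<le> 1/2"
    proof
      assume E: "two_Engel G"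
      obtain a where a: "a \<in> carrier G" and na: "a [^]\<^bsub>G\<^esub> (3::nat) \<noteq> \<one>\<^bsub>G\<^esub>"
        using ne unfolding exponent3_def by blast
      have D: "?X \<inter> l_coset G a ?X = {}" by (rule engel_disjoint[OF E a na])
      show "inner_measure M \<mu> ?X \<le> 1/2"
      proof (rule inner_le[OF L])
        fix Y assume Y: "Y \<in> M" "Y \<subseteq> ?X"
        have aY: "l_coset G a Y \<in> M" "\<mu> (l_coset G a Y) = \<mu> Y"
          using conjunct1[OF mu_transl[OF L a Y(1)]] conjunct2[OF mu_transl[OF L a Y(1)]] by blast+
        have "l_coset G a Y \<subseteq> l_coset G a ?X" using Y(2) by (auto simp: l_coset_def)
        hence DY: "Y \<inter> l_coset G a Y = {}" using D Y(2) by blast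
        have "\<mu> (Y \<union> l_coset G a Y) = \<mu> Y + \<mu> Y" using mu_add[OF L Y(1) aY(1) DY] aY(2) by simp
        moreover have "\<mu> (Y \<union> l_coset G a Y) \<le> 1" using mu_le1[OF L M_Un[OF L Y(1) aY(1)]] .
        ultimately show "\<mu> Y \<le> 1/2" by simp
      qed
    qed
  qed
  show ?thesis using P1 P2 by blast
qed

end
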